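(* Let $H\in\mathbb{R}^{n\times d}$ have rank $h$, $\Sigma\in\mathbb{R}^{n\times n}$ symmetric positive definite, $\Gamma_0$ the empirical covariance of an initial ensemble, $C_0=H\Gamma_0H^\top$, $C_{i+1}=\Sigma-\Sigma(C_i+\Sigma)^{-1}\Sigma$, and $\widetilde{\mathcal{M}}_i=\Sigma(C_i+\Sigma)^{-1}$. With $\widetilde{\mathcal{P}},\widetilde{\mathcal{Q}},\widetilde{\mathcal{N}}$ as in the context, for every $i\ge0$ these are complementary spectral projectors of $\widetilde{\mathcal{M}}_i$: each commutes with $\widetilde{\mathcal{M}}_i$ and is idempotent, their pairwise products are zero, and $\widetilde{\mathcal{P}}+\widetilde{\mathcal{Q}}+\widetilde{\mathcal{N}}=I_n$.
   Context: Let $r$ be the number of positive eigenvalues of $C_0\tilde w=\tilde\delta\Sigma\tilde w$. Let $\tilde w_1,\dots,\tilde w_n$ be a basis of $\mathbb{R}^n$ with $\tilde w_k^\top\Sigma\tilde w_l$ equal to $1$ if $k=l$, $0$ otherwise, each a generalized eigenvector of $(C_i,\Sigma)$ for every $i\ge0$, with $\tilde w_1,\dots,\tilde w_r\in\mathsf{Ran}(\Sigma^{-1}H)$ having positive eigenvalues, $\tilde w_{r+1},\dots,\tilde w_h\in\mathsf{Ran}(\Sigma^{-1}H)$ eigenvalue zero, $\tilde w_{h+1},\dots,\tilde w_n\in\mathsf{Ker}(H^\top)$ eigenvalue zero. With $\widetilde W=[\tilde w_1,\dots,\tilde w_n]$ and $\widetilde W_{k:l}$ its columns $k$ through $l$: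 $\widetilde{\mathcal{P}}=\Sigma\widetilde W_{1:r}\widetilde W_{1:r}^\top$, $\widetilde{\mathcal{Q}}=\Sigma\widetilde W_{r+1:h}\widetilde W_{r+1:h}^\top$, $\widetilde{\mathcal{N}}=\Sigma\widetilde W_{h+1:n}\widetilde W_{h+1:n}^\top$. Empirical covariance: $\Gamma_0=\frac1{J-1}\sum_j(v_0^{(j)}-\bar v_0)(v_0^{(j)}-\bar v_0)^\top$. *)

theory Defs
  imports "HOL-Analysis.Analysis"
begin

definition outer :: "real^'m \<Rightarrow> real^'n \<Rightarrow> real^'n^'m" where
  "outer x y = (\<chi> i j. x $ i * y $ j)"

definition ens_mean :: "('j::finite \<Rightarrow> real^'d) \<Rightarrow> real^'d" where
  "ens_mean v = (1 / real CARD('j)) *\<^sub>R (\<Sum>j\<in>UNIV. v j)"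

definition emp_cov :: "('j::finite \<Rightarrow> real^'d) \<Rightarrow> real^'d^'d" where
  "emp_cov v = (1 / (real CARD('j) - 1)) *\<^sub>R
      (\<Sum>j\<in>UNIV. outer (v j - ens_mean v) (v j - ens_mean v))"

fun Cseq :: "real^'n^'n \<Rightarrow> real^'n^'n \<Rightarrow> nat \<Rightarrow> real^'n^'n" where
  "Cseq Sig C0 0 = C0"
| "Cseq Sig C0 (Suc i) = Sig - Sig ** matrix_inv (Cseq Sig C0 i + Sig) ** Sig"

definition Mseq :: "real^'n^'n \<Rightarrow> real^'n^'n \<Rightarrow> nat \<Rightarrow> real^'n^'n" where
  "Mseq Sig C0 i = Sig ** matrix_inv (Cseq Sig C0 i + Sig)"

definition sym_pos_def :: "real^'n^'n \<Rightarrow> bool" where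
  "sym_pos_def S \<longleftrightarrow> transpose S = S \<and> (\<forall>x. x \<noteq> 0 \<longrightarrow> x \<bullet> (S *v x) > 0)"

definition gen_eigvec :: "real^'n^'n \<Rightarrow> real^'n^'n \<Rightarrow> real^'n \<Rightarrow> real \<Rightarrow> bool" where
  "gen_eigvec C S w \<delta> \<longleftrightarrow> w \<noteq> 0 \<and> C *v w = \<delta> *\<^sub>R (S *v w)"

definition proj_block :: "real^'n^'n \<Rightarrow> (nat \<Rightarrow> real^'n) \<Rightarrow> nat set \<Rightarrow> real^'n^'n" where
  "proj_block S w K = S ** (\<Sum>k\<in>K. outer (w k) (w k))"

end

theory Submission imports Defs begin

lemma outer_mv: "outer a b *v x = (b \<bullet> x) *\<^sub>R a"
  by (simp add: vec_eq_iff outer_def matrix_vector_mult_def inner_vec_def sum_distrib_left mult.commute mult.left_commute)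

lemma matrix_add_rdist: "((A + B) ** C) = (A ** C) + (B ** C)"
  by (vector matrix_matrix_mult_def sum.distrib[symmetric] field_simps)

definition Bm :: "(nat \<Rightarrow> real^'n) \<Rightarrow> (nat \<Rightarrow> real) \<Rightarrow> nat set \<Rightarrow> real^'n^'n" where
  "Bm w a K = (\<Sum>k\<in>K. a k *\<^sub>R outer (w k) (w k))"

lemma sum_mv: "finite K \<Longrightarrow> (\<Sum>k\<in>K. A k) *v x = (\<Sum>k\<in>K. A k *v x)"
  by (induction K rule: finite_induct) (auto simp: matrix_vector_mult_add_rdistrib)

lemma Bm_mv: "finite K \<Longrightarrow> Bm w a K *v x = (\<Sum>k\<in>K. (a k * (w k \<bullet> x)) *\<^sub>R w k)"
  unfolding Bm_def by (simp add: sum_mv outer_mv flip: scaleR_matrix_vector_assoc)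

lemma sym_inner: "transpose S = S \<Longrightarrow> u \<bullet> (S *v v) = (S *v u) \<bullet> (v::real^'n)"
  by (metis dot_lmul_matrix transpose_matrix_vector)

primrec dd :: "(nat \<Rightarrow> real) \<Rightarrow> nat \<Rightarrow> nat \<Rightarrow> real" where
  "dd d0 0 = d0"
| "dd d0 (Suc i) = (\<lambda>k. dd d0 i k / (1 + dd d0 i k))"

context
  fixes S :: "real^'n^'n" and w :: "nat \<Rightarrow> real^'n"
  assumes symS: "transpose S = S"
    and orth: "\<forall>k<CARD('n). \<forall>l<CARD('n). w k \<bullet> (S *v w l) = (if k = l then 1 else 0)"
begin

lemma Bm_S_Bm_mv:
  assumes K: "K \<subseteq> {..<CARD('n)}" and L: "L \<subseteq> {..<CARD('n)}"
  shows "Bm w a K *v (S *v (Bm w b L *v x)) = Bm w (\<lambda>k. a k * b k) (K \<inter> L) *v x"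
proof -
  have fK: "finite K" "finite L" using K L finite_subset by auto
  have inn: "w k \<bullet> (S *v (Bm w b L *v x)) = (if k \<in> L then b k * (w k \<bullet> x) else 0)" if "k \<in> K" for k
  proof -
    have "w k \<bullet> (S *v (Bm w b L *v x)) = (\<Sum>l\<in>L. (b l * (w l \<bullet> x)) * (w k \<bullet> (S *v w l)))"
      by (simp add: Bm_mv fK vec.sum inner_sum_right matrix_vector_mult_scaleR)
    also have "\<dots> = (\<Sum>l\<in>L. if l = k then b k * (w k \<bullet> x) else 0)"
    proof (rule sum.cong[OF refl])
      fix l assume l: "l \<in> L"
      have "k < CARD('n)" "l < CARD('n)" using that l K L by auto
      then show "b l * (w l \<bullet> x) * (w k \<bullet> (S *v w l)) = (if l = k then b k * (w k \<bullet> x) else 0)"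
        using orth by auto
    qed
    also have "\<dots> = (if k \<in> L then b k * (w k \<bullet> x) else 0)"
      using fK by (simp add: sum.delta')
    finally show ?thesis .
  qed
  have "Bm w a K *v (S *v (Bm w b L *v x)) = (\<Sum>k\<in>K. (if k \<in> L then (a k * b k * (w k \<bullet> x)) *\<^sub>R w k else 0))"
    unfolding Bm_mv[OF fK(1), where x="S *v (Bm w b L *v x)"] by (rule sum.cong[OF refl]) (simp add: inn)
  also have "\<dots> = Bm w (\<lambda>k. a k * b k) (K \<inter> L) *v x"
    using fK by (simp add: Bm_mv sum.inter_restrict)
  finally show ?thesis .
qed

lemma Bm_S_Bm:
  assumes K: "K \<subseteq> {..<CARD('n)}" and L: "L \<subseteq> {..<CARD('n)}"
  shows "Bm w a K ** S ** Bm w b L = Bm w (\<lambda>k. a k * b k) (K \<inter> L)"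
  by (rule matrix_eq[THEN iffD2]) (simp add: Bm_S_Bm_mv[OF K L] flip: matrix_vector_mul_assoc)

lemma span_id: "x = (\<Sum>k<CARD('n). (w k \<bullet> x) *\<^sub>R (S *v w k))"
proof -
  define u where "u k = S *v w k" for k
  define U where "U = u ` {..<CARD('n)}"
  have wu: "w l \<bullet> u k = (if l = k then 1 else 0)" if "l < CARD('n)" "k < CARD('n)" for k l
    using orth that unfolding u_def by auto
  have inj: "inj_on u {..<CARD('n)}"
  proof (rule inj_onI)
    fix k l assume k: "k \<in> {..<CARD('n)}" and l: "l \<in> {..<CARD('n)}" and e: "u k = u l"
    have "w k \<bullet> u k = w k \<bullet> u l" using e by simp
    then show "k = l" using wu k l by (auto split: if_splits)
  qed
  have fU: "finite U" unfolding U_def by simp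
  have cU: "card U = CARD('n)" unfolding U_def using card_image[OF inj] by simp
  have sumU: "(\<Sum>v\<in>U. f v *\<^sub>R v) = (\<Sum>k<CARD('n). f (u k) *\<^sub>R u k)" for f
    unfolding U_def by (simp add: sum.reindex[OF inj])
  have coef: "w l \<bullet> (\<Sum>k<CARD('n). f (u k) *\<^sub>R u k) = f (u l)" if "l < CARD('n)" for f l
  proof -
    have "w l \<bullet> (\<Sum>k<CARD('n). f (u k) *\<^sub>R u k) = (\<Sum>k<CARD('n). f (u k) * (w l \<bullet> u k))"
      by (simp add: inner_sum_right)
    also have "\<dots> = (\<Sum>k<CARD('n). if k = l then f (u l) else 0)"
      by (rule sum.cong[OF refl]) (simp add: wu that)
    also have "\<dots> = f (u l)" using that by simp
    finally show ?thesis .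
  qed
  have ind: "independent U"
  proof (rule independent_if_scalars_zero[OF fU])
    fix f v assume z: "(\<Sum>v\<in>U. f v *\<^sub>R v) = 0" and v: "v \<in> U"
    then obtain l where l: "l < CARD('n)" "v = u l" unfolding U_def by auto
    have "f (u l) = w l \<bullet> (\<Sum>v\<in>U. f v *\<^sub>R v)" using coef[OF l(1)] sumU by simp
    then show "f v = 0" using z l by simp
  qed
  have "UNIV \<subseteq> span U"
    by (rule card_ge_dim_independent[OF _ ind]) (auto simp: cU)
  then have "x \<in> span U" by auto
  then obtain c where c: "x = (\<Sum>v\<in>U. c v *\<^sub>R v)" using span_finite[OF fU] by auto
  then have x: "x = (\<Sum>k<CARD('n). c (u k) *\<^sub>R u k)" using sumU by simp
  have "(\<Sum>k<CARD('n). (w k \<bullet> x) *\<^sub>R (S *v w k)) = (\<Sum>k<CARD('n). c (u k) *\<^sub>R u k)"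
    by (rule sum.cong[OF refl]) (metis coef lessThan_iff u_def x)
  then show ?thesis using x by simp
qed

lemma S_Bm_all: "S ** Bm w (\<lambda>_. 1) {..<CARD('n)} = mat 1"
proof (rule matrix_eq[THEN iffD2], intro allI)
  fix x
  have "(S ** Bm w (\<lambda>_. 1) {..<CARD('n)}) *v x = (\<Sum>k<CARD('n). (w k \<bullet> x) *\<^sub>R (S *v w k))"
    by (simp add: Bm_mv vec.sum matrix_vector_mult_scaleR flip: matrix_vector_mul_assoc)
  then show "(S ** Bm w (\<lambda>_. 1) {..<CARD('n)}) *v x = mat 1 *v x"
    using span_id[of x] by simp
qed

lemma Bm_S_all: "Bm w (\<lambda>_. 1) {..<CARD('n)} ** S = mat 1"
  using S_Bm_all matrix_left_right_inverse by blast

lemma Bm_S_w: "l < CARD('n) \<Longrightarrow> Bm w a {..<CARD('n)} *v (S *v w l) = a l *\<^sub>R w l"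
proof -
  assume l: "l < CARD('n)"
  have "Bm w a {..<CARD('n)} *v (S *v w l) = (\<Sum>k<CARD('n). if k = l then a l *\<^sub>R w l else 0)"
    unfolding Bm_mv[OF finite_lessThan] by (rule sum.cong[OF refl]) (use orth l in auto)
  then show ?thesis using l by simp
qed

lemma eig_decomp:
  assumes "\<forall>k<CARD('n). C *v w k = d k *\<^sub>R (S *v w k)"
  shows "C = S ** Bm w d {..<CARD('n)} ** S"
proof (rule matrix_eq[THEN iffD2], intro allI)
  fix x
  have "C *v x = C *v (Bm w (\<lambda>_. 1) {..<CARD('n)} *v (S *v x))"
    by (simp add: matrix_vector_mul_assoc Bm_S_all)
  also have "\<dots> = (\<Sum>k<CARD('n). (w k \<bullet> (S *v x)) *\<^sub>R (C *v w k))"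
    by (simp add: Bm_mv vec.sum matrix_vector_mult_scaleR)
  also have "\<dots> = (\<Sum>k<CARD('n). (d k * (w k \<bullet> (S *v x))) *\<^sub>R (S *v w k))"
    by (rule sum.cong[OF refl]) (use assms in auto)
  also have "\<dots> = (S ** Bm w d {..<CARD('n)} ** S) *v x"
    by (simp add: Bm_mv vec.sum matrix_vector_mult_scaleR flip: matrix_vector_mul_assoc)
  finally show "C *v x = (S ** Bm w d {..<CARD('n)} ** S) *v x" .
qed

lemma Bm_add: "Bm w a K + Bm w b K = Bm w (\<lambda>k. a k + b k) K"
  unfolding Bm_def by (simp add: sum.distrib scaleR_add_left)

lemma Bm_cong: "(\<And>k. k \<in> K \<Longrightarrow> a k = b k) \<Longrightarrow> Bm w a K = Bm w b K"
  unfolding Bm_def by (rule sum.cong) auto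

lemma inv_formula:
  assumes d: "\<forall>k<CARD('n). d k \<ge> 0"
  shows "matrix_inv (S ** Bm w d {..<CARD('n)} ** S + S) = Bm w (\<lambda>k. 1 / (1 + d k)) {..<CARD('n)}"
proof -
  let ?N = "{..<CARD('n)}"
  let ?A = "S ** Bm w d ?N ** S + S" and ?G = "Bm w (\<lambda>k. 1 / (1 + d k)) ?N"
  have e1: "S ** Bm w d ?N ** S ** ?G = S ** Bm w (\<lambda>k. d k * (1 / (1 + d k))) ?N"
  proof -
    have h: "Bm w d ?N ** S ** ?G = Bm w (\<lambda>k. d k * (1 / (1 + d k))) ?N"
      using Bm_S_Bm[of ?N ?N] by simp
    have "S ** Bm w d ?N ** S ** ?G = S ** (Bm w d ?N ** S ** ?G)" by (simp add: matrix_mul_assoc)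
    then show ?thesis using h by simp
  qed
  have e2: "S ** ?G = S ** Bm w (\<lambda>k. 1 * (1 / (1 + d k))) ?N"
    by (rule arg_cong[where f="\<lambda>X. S ** X"]) (rule Bm_cong, simp)
  have "?A ** ?G = S ** Bm w d ?N ** S ** ?G + S ** ?G"
    by (rule matrix_add_rdist)
  also have "\<dots> = S ** (Bm w (\<lambda>k. d k * (1 / (1 + d k))) ?N + Bm w (\<lambda>k. 1 * (1 / (1 + d k))) ?N)"
    unfolding matrix_add_ldistrib by (subst e1, subst e2, rule refl)
  also have "\<dots> = S ** Bm w (\<lambda>_. 1) ?N"
    unfolding Bm_add by (rule arg_cong[where f="\<lambda>X. S ** X"], rule Bm_cong)
      (use d in \<open>auto simp: field_simps\<close>)
  also have "\<dots> = mat 1" by (rule S_Bm_all)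
  finally have AG: "?A ** ?G = mat 1" .
  then have GA: "?G ** ?A = mat 1" using matrix_left_right_inverse by blast
  have ex: "?A ** matrix_inv ?A = mat 1 \<and> matrix_inv ?A ** ?A = mat 1"
    unfolding matrix_inv_def by (rule someI[of _ ?G]) (use AG GA in auto)
  have "matrix_inv ?A = (?G ** ?A) ** matrix_inv ?A" using GA by simp
  also have "\<dots> = ?G" using ex by (simp flip: matrix_mul_assoc)
  finally show ?thesis .
qed

lemma iter:
  assumes e0: "\<forall>k<CARD('n). C0 *v w k = d0 k *\<^sub>R (S *v w k)" and p0: "\<forall>k<CARD('n). d0 k \<ge> 0"
  shows "(\<forall>k<CARD('n). Cseq S C0 i *v w k = dd d0 i k *\<^sub>R (S *v w k)) \<and> (\<forall>k<CARD('n). dd d0 i k \<ge> 0)"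
proof (induction i)
  case 0
  then show ?case using e0 p0 by simp
next
  case (Suc i)
  let ?N = "{..<CARD('n)}"
  let ?d = "dd d0 i"
  let ?G = "Bm w (\<lambda>k. 1 / (1 + ?d k)) ?N"
  have dec: "Cseq S C0 i = S ** Bm w ?d ?N ** S"
    using Suc.IH by (intro eig_decomp) auto
  have inv: "matrix_inv (Cseq S C0 i + S) = ?G"
    unfolding dec using Suc.IH by (intro inv_formula) auto
  have C: "Cseq S C0 (Suc i) = S - S ** ?G ** S" using inv by simp
  have ev: "Cseq S C0 (Suc i) *v w k = dd d0 (Suc i) k *\<^sub>R (S *v w k)" if k: "k < CARD('n)" for k
  proof -
    have nz: "1 + ?d k \<noteq> 0" using Suc.IH k by (smt (verit))
    have "Cseq S C0 (Suc i) *v w k = S *v w k - S *v (?G *v (S *v w k))"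
      unfolding C by (simp add: matrix_vector_mult_diff_rdistrib matrix_vector_mul_assoc matrix_mul_assoc)
    also have "\<dots> = S *v w k - (1 / (1 + ?d k)) *\<^sub>R (S *v w k)"
      by (simp add: Bm_S_w k matrix_vector_mult_scaleR)
    also have "\<dots> = dd d0 (Suc i) k *\<^sub>R (S *v w k)"
    proof -
      have "1 - 1 / (1 + ?d k) = dd d0 (Suc i) k" using nz by (simp add: field_simps)
      then show ?thesis by (metis scaleR_diff_left scaleR_one)
    qed
    finally show ?thesis .
  qed
  have pos: "dd d0 (Suc i) k \<ge> 0" if "k < CARD('n)" for k
    using Suc.IH that by simp
  show ?case using ev pos by blast
qed

lemma Mseq_formula:
  assumes e0: "\<forall>k<CARD('n). C0 *v w k = d0 k *\<^sub>R (S *v w k)" and p0: "\<forall>k<CARD('n). d0 k \<ge> 0"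
  shows "Mseq S C0 i = S ** Bm w (\<lambda>k. 1 / (1 + dd d0 i k)) {..<CARD('n)}"
proof -
  have dec: "Cseq S C0 i = S ** Bm w (dd d0 i) {..<CARD('n)} ** S"
    using iter[OF e0 p0, of i] by (intro eig_decomp) auto
  show ?thesis unfolding Mseq_def dec using iter[OF e0 p0, of i] by (subst inv_formula) auto
qed

lemma SBm_prod:
  assumes K: "K \<subseteq> {..<CARD('n)}" and L: "L \<subseteq> {..<CARD('n)}"
  shows "(S ** Bm w a K) ** (S ** Bm w b L) = S ** Bm w (\<lambda>k. a k * b k) (K \<inter> L)"
proof -
  have "(S ** Bm w a K) ** (S ** Bm w b L) = S ** (Bm w a K ** S ** Bm w b L)"
    by (simp add: matrix_mul_assoc)
  then show ?thesis using Bm_S_Bm[OF K L] by simp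
qed

end

lemma Bm_empty: "Bm w a {} = 0" unfolding Bm_def by simp

lemma proj_Bm: "proj_block S w K = S ** Bm w (\<lambda>_. 1) K"
  unfolding proj_block_def Bm_def by simp

theorem proposition4p4:
  fixes H :: "real^'d^'n"
    and Sig :: "real^'n^'n"
    and v0 :: "'j::finite \<Rightarrow> real^'d"
    and w :: "nat \<Rightarrow> real^'n"
    and r h :: nat
  defines "C0 \<equiv> H ** emp_cov v0 ** transpose H"
  assumes Sig_spd: "sym_pos_def Sig"
    and h_def: "h = rank H"
    and r_le: "r \<le> h"
    and orth: "\<forall>k<CARD('n). \<forall>l<CARD('n). w k \<bullet> (Sig *v w l) = (if k = l then 1 else 0)"
    and eig_all: "\<forall>i. \<forall>k<CARD('n). \<exists>\<delta>. gen_eigvec (Cseq Sig C0 i) Sig (w k) \<delta>"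
    and pos: "\<forall>k<r. w k \<in> range (\<lambda>x. (matrix_inv Sig ** H) *v x)
                   \<and> (\<exists>\<delta>>0. gen_eigvec C0 Sig (w k) \<delta>)"
    and zero_ran: "\<forall>k. r \<le> k \<and> k < h \<longrightarrow> w k \<in> range (\<lambda>x. (matrix_inv Sig ** H) *v x)
                   \<and> gen_eigvec C0 Sig (w k) 0"
    and zero_ker: "\<forall>k. h \<le> k \<and> k < CARD('n) \<longrightarrow> transpose H *v w k = 0
                   \<and> gen_eigvec C0 Sig (w k) 0"
  shows "\<forall>i. let P = proj_block Sig w {0..<r};
                 Q = proj_block Sig w {r..<h};
                 N = proj_block Sig w {h..<CARD('n)};
                 M = Mseq Sig C0 i
             in P ** M = M ** P \<and> Q ** M = M ** Q \<and> N ** M = M ** N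
              \<and> P ** P = P \<and> Q ** Q = Q \<and> N ** N = N
              \<and> P ** Q = 0 \<and> Q ** P = 0 \<and> P ** N = 0 \<and> N ** P = 0
              \<and> Q ** N = 0 \<and> N ** Q = 0
              \<and> P + Q + N = mat 1"
proof
  fix i
  let ?n = "CARD('n)"
  have symS: "transpose Sig = Sig" using Sig_spd unfolding sym_pos_def_def by simp
  have hn: "h \<le> ?n" using rank_bound[of H] h_def by simp
  define d0 where "d0 k = w k \<bullet> (C0 *v w k)" for k
  have eig0: "\<exists>\<delta>\<ge>0. C0 *v w k = \<delta> *\<^sub>R (Sig *v w k)" if k: "k < ?n" for k
  proof (cases "k < r")
    case True
    then obtain \<delta> where "\<delta> > 0" "gen_eigvec C0 Sig (w k) \<delta>" using pos by blast
    then show ?thesis unfolding gen_eigvec_def by (intro exI[of _ \<delta>]) simp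
  next
    case False
    show ?thesis
    proof (cases "k < h")
      case True
      then have "gen_eigvec C0 Sig (w k) 0" using zero_ran False by simp
      then show ?thesis unfolding gen_eigvec_def by (intro exI[of _ 0]) simp
    next
      case F2: False
      then have "gen_eigvec C0 Sig (w k) 0" using zero_ker k by simp
      then show ?thesis unfolding gen_eigvec_def by (intro exI[of _ 0]) simp
    qed
  qed
  have e0: "\<forall>k<?n. C0 *v w k = d0 k *\<^sub>R (Sig *v w k)" and p0: "\<forall>k<?n. d0 k \<ge> 0"
  proof -
    have "C0 *v w k = d0 k *\<^sub>R (Sig *v w k) \<and> d0 k \<ge> 0" if k: "k < ?n" for k
    proof -
      obtain \<delta> where \<delta>: "\<delta> \<ge> 0" "C0 *v w k = \<delta> *\<^sub>R (Sig *v w k)" using eig0[OF k] by blast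
      have "d0 k = \<delta>" unfolding d0_def \<delta>(2) using orth k by simp
      then show ?thesis using \<delta> by simp
    qed
    then show "\<forall>k<?n. C0 *v w k = d0 k *\<^sub>R (Sig *v w k)" "\<forall>k<?n. d0 k \<ge> 0" by auto
  qed
  define g where "g k = 1 / (1 + dd d0 i k)" for k
  have M: "Mseq Sig C0 i = Sig ** Bm w g {..<?n}"
    unfolding g_def using Mseq_formula[OF symS orth e0 p0] by simp
  have sub: "{0..<r} \<subseteq> {..<?n}" "{r..<h} \<subseteq> {..<?n}" "{h..<?n} \<subseteq> {..<?n}" "{..<?n} \<subseteq> {..<?n}"
    using r_le hn by auto
  note pr = SBm_prod[OF symS orth]
  have comm: "Sig ** Bm w (\<lambda>_. 1) K ** (Sig ** Bm w g {..<?n}) = Sig ** Bm w g {..<?n} ** (Sig ** Bm w (\<lambda>_. 1) K)"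
    if K: "K \<subseteq> {..<?n}" for K
  proof -
    have "Sig ** Bm w (\<lambda>_. 1) K ** (Sig ** Bm w g {..<?n}) = Sig ** Bm w (\<lambda>k. 1 * g k) (K \<inter> {..<?n})"
      by (rule pr[OF K sub(4)])
    also have "\<dots> = Sig ** Bm w (\<lambda>k. g k * 1) ({..<?n} \<inter> K)" by (simp add: Int_commute)
    also have "\<dots> = Sig ** Bm w g {..<?n} ** (Sig ** Bm w (\<lambda>_. 1) K)"
      by (rule pr[OF sub(4) K, symmetric])
    finally show ?thesis .
  qed
  have idem: "Sig ** Bm w (\<lambda>_. 1) K ** (Sig ** Bm w (\<lambda>_. 1) K) = Sig ** Bm w (\<lambda>_. 1) K"
    if K: "K \<subseteq> {..<?n}" for K
    using pr[OF K K, of "\<lambda>_. 1" "\<lambda>_. 1"] by simp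
  have disj: "Sig ** Bm w (\<lambda>_. 1) K ** (Sig ** Bm w (\<lambda>_. 1) L) = 0"
    if K: "K \<subseteq> {..<?n}" and L: "L \<subseteq> {..<?n}" and KL: "K \<inter> L = {}" for K L
    using pr[OF K L, of "\<lambda>_. 1" "\<lambda>_. 1"] KL by (simp add: Bm_empty)
  have sum: "Sig ** Bm w (\<lambda>_. 1) {0..<r} + Sig ** Bm w (\<lambda>_. 1) {r..<h} + Sig ** Bm w (\<lambda>_. 1) {h..<?n} = mat 1"
  proof -
    have "Bm w (\<lambda>_. 1) {0..<r} + Bm w (\<lambda>_. 1) {r..<h} + Bm w (\<lambda>_. 1) {h..<?n} = Bm w (\<lambda>_. 1) {..<?n}"
      unfolding Bm_def using r_le hn by (simp add: sum.atLeastLessThan_concat lessThan_atLeast0)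
    then show ?thesis using S_Bm_all[OF symS orth] by (simp flip: matrix_add_ldistrib)
  qed
  have i12: "{0..<r} \<inter> {r..<h} = {}" and i21: "{r..<h} \<inter> {0..<r} = {}"
    and i13: "{0..<r} \<inter> {h..<?n} = {}" and i31: "{h..<?n} \<inter> {0..<r} = {}"
    and i23: "{r..<h} \<inter> {h..<?n} = {}" and i32: "{h..<?n} \<inter> {r..<h} = {}"
    using r_le by auto
  show "let P = proj_block Sig w {0..<r};
                 Q = proj_block Sig w {r..<h};
                 N = proj_block Sig w {h..<CARD('n)};
                 M = Mseq Sig C0 i
             in P ** M = M ** P \<and> Q ** M = M ** Q \<and> N ** M = M ** N
              \<and> P ** P = P \<and> Q ** Q = Q \<and> N ** N = N
              \<and> P ** Q = 0 \<and> Q ** P = 0 \<and> P ** N = 0 \<and> N ** P = 0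
              \<and> Q ** N = 0 \<and> N ** Q = 0
              \<and> P + Q + N = mat 1"
    unfolding Let_def proj_Bm M
    apply (intro conjI)
    apply (rule comm[OF sub(1)])
    apply (rule comm[OF sub(2)])
    apply (rule comm[OF sub(3)])
    apply (rule idem[OF sub(1)])
    apply (rule idem[OF sub(2)])
    apply (rule idem[OF sub(3)])
    apply (rule disj[OF sub(1) sub(2) i12])
    apply (rule disj[OF sub(2) sub(1) i21])
    apply (rule disj[OF sub(1) sub(3) i13])
    apply (rule disj[OF sub(3) sub(1) i31])
    apply (rule disj[OF sub(2) sub(3) i23])
    apply (rule disj[OF sub(3) sub(2) i32])
    apply (rule sum)
    done
qed

end
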